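(* For all integers $n,f,k$ with $1\le k\le f\le n-1$, the task $k\text{-TAg}(n,f)$ is not $C$-reducible to $\mathrm{Cons}(n,n-1)$, and hence is not $C$-reducible to $\mathrm{Cons}(n,f)$.
   Context: Model: a finite set of processes runs an asynchronous algorithm communicating by reliable message passing with unbounded delays and speeds; processes fail only by crashing. Time is $\mathcal T=\mathbb N$; a failure pattern $F$ for $\Pi$ is a nondecreasing map $\mathcal T\to2^\Pi$, $Faulty(F)=\bigcup_tF(t)$. A binary agreement problem $P$ for $\Pi$ maps each $(F,\vec V)$, $\vec V\in\{0,1\}^\Pi$, to a nonempty $P(F,\vec V)\subseteq\{0,1\}$; a task is $T=(P,f)$. An algorithm solves $T$ if in every run with $|Faulty(F)|\le f$ and initial values $\vec V$: every correct process eventually decides, decisions are irrevocable, no two processes decide differently, and decisions lie in $P(F,\vec V)$. $k\text{-TAg}_\Pi(F,\vec V)=\{0\}$ if at least $k$ entries of $\vec V$ are $0$; $=\{1\}$ if $\vec V$ is all-ones and $|Faulty(F)|\le k-1$; $=\{0,1\}$ otherwise; $k\text{-TAg}(\Pi,f)=(k\text{-TAg}_\Pi,f)$; $k\text{-TAg}(n,f)$ and $\mathrm{Cons}(n,f)=n\text{-TAg}(n,f)$ are the versions for $\Pi=\{1,\dots,n\}$ ($\mathrm{Cons}(n,n-1)$ is wait-free binary Consensus). Oracles: for $T=(P,f)$ on $\Pi$, $\mathcal O.T$ is a black box with consultants $\Pi$; its history is a sequence of successive consultations, in each of which every consultant may submit at most one query in $\{0,1\}$ and the oracle returns a common response $d$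 with $d\in P(F,\vec V)$ for every $\vec V$ extending the partial query vector (the oracle may use the whole failure pattern, including future crashes), and every correct querier gets the response whenever at least $|\Pi|-f$ consultants query; $\mathcal O.T$ is the most general such oracle. $T_1\le_C T_2$ means there is an algorithm solving $T_1$ whose processes, besides message passing, may consult (repeatedly, waiting for each answer) the single oracle $\mathcal O.T_2$ (for a renamed copy of $T_2$ on the relevant processes). *)

theory Defs
  imports Main
begin

type_synonym fpattern = "nat \<Rightarrow> nat set"
type_synonym problem = "fpattern \<Rightarrow> (nat \<Rightarrow> nat) \<Rightarrow> nat set"
type_synonym task = "problem \<times> nat"

definition Proc :: "nat \<Rightarrow> nat set" where
  "Proc n = {1..n}"

definition failure_pattern :: "nat set \<Rightarrow> fpattern \<Rightarrow> bool" where
  "failure_pattern P F \<longleftrightarrow> mono F \<and> (\<forall>t. F t \<subseteq> P)"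

definition Faulty :: "fpattern \<Rightarrow> nat set" where
  "Faulty F = (\<Union>t. F t)"

definition binvec :: "nat set \<Rightarrow> (nat \<Rightarrow> nat) \<Rightarrow> bool" where
  "binvec P V \<longleftrightarrow> (\<forall>p\<in>P. V p \<in> {0, 1})"

definition kTAg_prob :: "nat \<Rightarrow> nat set \<Rightarrow> problem" where
  "kTAg_prob k P F V =
     (if k \<le> card {p \<in> P. V p = 0} then {0}
      else if (\<forall>p\<in>P. V p = 1) \<and> card (Faulty F) \<le> k - 1 then {1}
      else {0, 1})"

definition kTAg :: "nat \<Rightarrow> nat \<Rightarrow> nat \<Rightarrow> task" where
  "kTAg k n f = (kTAg_prob k (Proc n), f)"

definition Cons :: "nat \<Rightarrow> nat \<Rightarrow> task" where
  "Cons n f = kTAg n n f"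

text \<open>Inputs of a step: spontaneous step, receipt of a message (sender, content),
  or receipt of the oracle response.\<close>
datatype 'm inp = ISpont | IMsg nat 'm | IResp nat

text \<open>A (deterministic) algorithm: initial state from process id and initial value;
  a transition producing new state, messages (destination, content) to send, and
  optionally a query to the oracle; the decision (write-once, checked in the spec).\<close>
record ('s, 'm) algorithm =
  init :: "nat \<Rightarrow> nat \<Rightarrow> 's"
  trans :: "nat \<Rightarrow> 's \<Rightarrow> 'm inp \<Rightarrow> 's \<times> (nat \<times> 'm) list \<times> nat option"
  decision :: "'s \<Rightarrow> nat option"

text \<open>A run: at each time at most one process takes a step with a given input;
  src t identifies the send event (send time, index in output list) of a delivered
  message; st gives the local states; resp j is the common response of the oracle
  in consultation j.\<close>
record ('s, 'm) run =
  sched :: "nat \<Rightarrow> (nat \<times> 'm inp) option"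
  src :: "nat \<Rightarrow> nat \<times> nat"
  st :: "nat \<Rightarrow> nat \<Rightarrow> 's"
  resp :: "nat \<Rightarrow> nat"

definition step_out :: "('s, 'm) algorithm \<Rightarrow> ('s, 'm) run \<Rightarrow> nat
    \<Rightarrow> ('s \<times> (nat \<times> 'm) list \<times> nat option) option" where
  "step_out A r t = (case sched r t of None \<Rightarrow> None
                      | Some (p, x) \<Rightarrow> Some (trans A p (st r t p) x))"

definition sent :: "('s, 'm) algorithm \<Rightarrow> ('s, 'm) run \<Rightarrow> nat \<Rightarrow> (nat \<times> 'm) list" where
  "sent A r t = (case step_out A r t of None \<Rightarrow> [] | Some y \<Rightarrow> fst (snd y))"

definition queried :: "('s, 'm) algorithm \<Rightarrow> ('s, 'm) run \<Rightarrow> nat \<Rightarrow> nat option" where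
  "queried A r t = (case step_out A r t of None \<Rightarrow> None | Some y \<Rightarrow> snd (snd y))"

definition steps_of :: "('s, 'm) run \<Rightarrow> nat \<Rightarrow> nat \<Rightarrow> bool" where
  "steps_of r p t \<longleftrightarrow> (\<exists>x. sched r t = Some (p, x))"

definition is_recv :: "('s, 'm) run \<Rightarrow> nat \<Rightarrow> bool" where
  "is_recv r t \<longleftrightarrow> (\<exists>p q m. sched r t = Some (p, IMsg q m))"

definition is_query_of :: "('s, 'm) algorithm \<Rightarrow> ('s, 'm) run \<Rightarrow> nat \<Rightarrow> nat \<Rightarrow> bool" where
  "is_query_of A r p t \<longleftrightarrow> steps_of r p t \<and> queried A r t \<noteq> None"

definition is_resp_of :: "('s, 'm) run \<Rightarrow> nat \<Rightarrow> nat \<Rightarrow> bool" where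
  "is_resp_of r p t \<longleftrightarrow> (\<exists>d. sched r t = Some (p, IResp d))"

definition qcount :: "('s, 'm) algorithm \<Rightarrow> ('s, 'm) run \<Rightarrow> nat \<Rightarrow> nat \<Rightarrow> nat" where
  "qcount A r t p = card {s. s < t \<and> is_query_of A r p s}"

definition rcount :: "('s, 'm) run \<Rightarrow> nat \<Rightarrow> nat \<Rightarrow> nat" where
  "rcount r t p = card {s. s < t \<and> is_resp_of r p s}"

definition pending :: "('s, 'm) algorithm \<Rightarrow> ('s, 'm) run \<Rightarrow> nat \<Rightarrow> nat \<Rightarrow> bool" where
  "pending A r t p \<longleftrightarrow> rcount r t p < qcount A r t p"

text \<open>p submits query value v in consultation j (the j-th query of p, counting from 0).\<close>
definition query_val :: "('s, 'm) algorithm \<Rightarrow> ('s, 'm) run \<Rightarrow> nat \<Rightarrow> nat \<Rightarrow> nat \<Rightarrow> bool" where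
  "query_val A r j p v \<longleftrightarrow>
     (\<exists>s. is_query_of A r p s \<and> qcount A r s p = j \<and> queried A r s = Some v)"

definition queries_in :: "('s, 'm) algorithm \<Rightarrow> ('s, 'm) run \<Rightarrow> nat \<Rightarrow> nat \<Rightarrow> bool" where
  "queries_in A r j p \<longleftrightarrow> (\<exists>v. query_val A r j p v)"

text \<open>Admissible runs of algorithm A on processes Proc n, with failure pattern F,
  initial values V, consulting the most general oracle for task (Po, fo).\<close>
definition admissible :: "('s, 'm) algorithm \<Rightarrow> nat \<Rightarrow> problem \<Rightarrow> nat
    \<Rightarrow> fpattern \<Rightarrow> (nat \<Rightarrow> nat) \<Rightarrow> ('s, 'm) run \<Rightarrow> bool" where
  "admissible A n Po fo F V r \<longleftrightarrow>
     \<comment> \<open>initial states\<close>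
     (\<forall>p. st r 0 p = init A p (V p))
   \<and> \<comment> \<open>no step: nothing changes\<close>
     (\<forall>t. sched r t = None \<longrightarrow> st r (Suc t) = st r t)
   \<and> \<comment> \<open>a step by a process of Proc n that has not crashed\<close>
     (\<forall>t p x. sched r t = Some (p, x) \<longrightarrow>
        p \<in> Proc n \<and> p \<notin> F t \<and>
        st r (Suc t) = (st r t)(p := fst (trans A p (st r t p) x)))
   \<and> \<comment> \<open>every received message was sent earlier to the receiver by the claimed sender\<close>
     (\<forall>t p q m. sched r t = Some (p, IMsg q m) \<longrightarrow>
        fst (src r t) < t \<and> steps_of r q (fst (src r t)) \<and>
        snd (src r t) < length (sent A r (fst (src r t))) \<and>
        sent A r (fst (src r t)) ! snd (src r t) = (p, m))
   \<and> \<comment> \<open>no duplication\<close>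
     inj_on (src r) {t. is_recv r t}
   \<and> \<comment> \<open>an oracle response answers the pending query, with the common response
         of its consultation\<close>
     (\<forall>t p d. sched r t = Some (p, IResp d) \<longrightarrow>
        pending A r t p \<and> d = resp r (rcount r t p))
   \<and> \<comment> \<open>a process waits for the answer to its query\<close>
     (\<forall>t p x. sched r t = Some (p, x) \<and> pending A r t p \<longrightarrow> (\<exists>d. x = IResp d))
   \<and> \<comment> \<open>oracle safety: the response lies in Po F W for every W extending the
         partial query vector of the consultation\<close>
     (\<forall>j. (\<exists>t p. is_resp_of r p t \<and> rcount r t p = j) \<longrightarrow>
        (\<forall>W. binvec (Proc n) W \<and> (\<forall>p v. p \<in> Proc n \<and> query_val A r j p v \<longrightarrow> W p = v)
             \<longrightarrow> resp r j \<in> Po F W))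
   \<and> \<comment> \<open>oracle liveness: if at least n - fo consultants query in consultation j,
         every correct querier gets the response\<close>
     (\<forall>j. n - fo \<le> card {p \<in> Proc n. queries_in A r j p} \<longrightarrow>
        (\<forall>p \<in> Proc n - Faulty F. queries_in A r j p \<longrightarrow>
            (\<exists>t. is_resp_of r p t \<and> rcount r t p = j)))
   \<and> \<comment> \<open>correct processes take infinitely many steps (unless waiting forever on the oracle)\<close>
     (\<forall>p \<in> Proc n - Faulty F. \<forall>t. \<exists>t' \<ge> t.
        steps_of r p t' \<or> (\<forall>t'' \<ge> t'. pending A r t'' p))
   \<and> \<comment> \<open>reliable channels (unless the receiver waits forever on the oracle)\<close>
     (\<forall>s i p. i < length (sent A r s) \<and> fst (sent A r s ! i) = p \<and> p \<in> Proc n - Faulty F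
        \<longrightarrow> (\<exists>t. is_recv r t \<and> src r t = (s, i)) \<or> (\<exists>t. \<forall>t' \<ge> t. pending A r t' p))"

definition solves_with :: "nat \<Rightarrow> ('s, 'm) algorithm \<Rightarrow> task \<Rightarrow> task \<Rightarrow> bool" where
  "solves_with n A T Orc \<longleftrightarrow>
    (\<forall>F V r. failure_pattern (Proc n) F \<and> card (Faulty F) \<le> snd T \<and> binvec (Proc n) V
        \<and> admissible A n (fst Orc) (snd Orc) F V r \<longrightarrow>
       (\<forall>p \<in> Proc n - Faulty F. \<exists>t d. decision A (st r t p) = Some d)
     \<and> (\<forall>p t t' d. p \<in> Proc n \<and> t \<le> t' \<and> decision A (st r t p) = Some d
           \<longrightarrow> decision A (st r t' p) = Some d)
     \<and> (\<forall>p q t t' d d'. p \<in> Proc n \<and> q \<in> Proc n \<and> decision A (st r t p) = Some d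
           \<and> decision A (st r t' q) = Some d' \<longrightarrow> d = d')
     \<and> (\<forall>p t d. p \<in> Proc n \<and> decision A (st r t p) = Some d \<longrightarrow> d \<in> fst T F V))"

end

theory Submission
  imports Defs
begin

record ('s, 'm) cfg =
  cst :: "nat \<Rightarrow> 's"
  box :: "nat \<Rightarrow> (nat \<times> 'm \<times> (nat \<times> nat)) list"
  qc :: "nat \<Rightarrow> nat"
  rc :: "nat \<Rightarrow> nat"
  lq :: "nat \<Rightarrow> nat"
  rtab :: "nat \<Rightarrow> nat option"

definition ans :: "('s, 'm) cfg \<Rightarrow> nat \<Rightarrow> nat" where
  "ans c p = (case rtab c (rc c p) of Some d \<Rightarrow> d | None \<Rightarrow> lq c p)"

definition inp_of :: "('s, 'm) cfg \<Rightarrow> nat \<Rightarrow> 'm inp" where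
  "inp_of c p = (if rc c p < qc c p then IResp (ans c p)
     else (case box c p of [] \<Rightarrow> ISpont | e # _ \<Rightarrow> IMsg (fst e) (fst (snd e))))"

definition newmsgs :: "nat \<Rightarrow> nat \<Rightarrow> (nat \<times> 'm) list \<Rightarrow> nat \<Rightarrow> (nat \<times> 'm \<times> (nat \<times> nat)) list" where
  "newmsgs p t out q = map (\<lambda>i. (p, snd (out ! i), (t, i))) (filter (\<lambda>i. fst (out ! i) = q) [0..<length out])"

definition stepc :: "('s, 'm) algorithm \<Rightarrow> nat \<Rightarrow> nat \<Rightarrow> ('s, 'm) cfg \<Rightarrow> ('s, 'm) cfg" where
  "stepc A p t c = (let y = trans A p (cst c p) (inp_of c p); pend = (rc c p < qc c p) in
    \<lparr>cst = (cst c)(p := fst y),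
     box = (\<lambda>q. (if q = p \<and> \<not> pend \<and> box c p \<noteq> [] then tl (box c q) else box c q) @ newmsgs p t (fst (snd y)) q),
     qc = (if snd (snd y) = None then qc c else (qc c)(p := Suc (qc c p))),
     rc = (if pend then (rc c)(p := Suc (rc c p)) else rc c),
     lq = (case snd (snd y) of None \<Rightarrow> lq c | Some v \<Rightarrow> (lq c)(p := v)),
     rtab = (if pend then (rtab c)(rc c p := Some (ans c p)) else rtab c)\<rparr>)"

primrec cfgs :: "('s, 'm) algorithm \<Rightarrow> (nat \<Rightarrow> nat) \<Rightarrow> (nat \<Rightarrow> nat) \<Rightarrow> nat \<Rightarrow> ('s, 'm) cfg" where
  "cfgs A V w 0 = \<lparr>cst = (\<lambda>p. init A p (V p)), box = (\<lambda>p. []), qc = (\<lambda>p. 0), rc = (\<lambda>p. 0),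
                   lq = (\<lambda>p. 0), rtab = (\<lambda>j. None)\<rparr>"
| "cfgs A V w (Suc t) = stepc A (w t) t (cfgs A V w t)"

definition rresp :: "('s, 'm) algorithm \<Rightarrow> (nat \<Rightarrow> nat) \<Rightarrow> (nat \<Rightarrow> nat) \<Rightarrow> nat \<Rightarrow> nat" where
  "rresp A V w j = (if \<exists>t. rtab (cfgs A V w t) j \<noteq> None
     then the (rtab (cfgs A V w (LEAST t. rtab (cfgs A V w t) j \<noteq> None)) j) else 0)"

definition mkrun :: "('s, 'm) algorithm \<Rightarrow> (nat \<Rightarrow> nat) \<Rightarrow> (nat \<Rightarrow> nat) \<Rightarrow> ('s, 'm) run" where
  "mkrun A V w = \<lparr>sched = (\<lambda>t. Some (w t, inp_of (cfgs A V w t) (w t))),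
     src = (\<lambda>t. snd (snd (hd (box (cfgs A V w t) (w t))))),
     st = (\<lambda>t. cst (cfgs A V w t)), resp = rresp A V w\<rparr>"

lemma card_Suc_split: "card {s. s < Suc t \<and> P s} = card {s. s < t \<and> P s} + (if P t then 1 else 0)"
proof -
  have "{s. s < Suc t \<and> P s} = {s. s < t \<and> P s} \<union> (if P t then {t} else {})" by (auto simp: less_Suc_eq)
  then show ?thesis by auto
qed

lemma kTAg_safe:
  assumes p: "p \<in> Proc n" and W: "binvec (Proc n) W" and d: "W p = d"
  shows "d \<in> kTAg_prob n (Proc n) F W"
proof -
  have fin: "finite (Proc n)" and cn: "card (Proc n) = n" by (auto simp: Proc_def)
  have d01: "d \<in> {0, 1}" using W p d by (auto simp: binvec_def)
  show ?thesis
  proof (cases "n \<le> card {q \<in> Proc n. W q = 0}")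
    case True
    have "{q \<in> Proc n. W q = 0} = Proc n"
      by (rule card_seteq[OF fin]) (use True cn in auto)
    then have "d = 0" using p d by auto
    then show ?thesis using True by (simp add: kTAg_prob_def)
  next
    case False
    then show ?thesis using d01 p d by (auto simp: kTAg_prob_def)
  qed
qed

context
  fixes A :: "('s, 'm) algorithm" and V :: "nat \<Rightarrow> nat" and w :: "nat \<Rightarrow> nat"
begin

declare cfgs.simps(2)[simp del]

abbreviation "cf \<equiv> cfgs A V w"
abbreviation "rn \<equiv> mkrun A V w"
abbreviation "xi t \<equiv> inp_of (cf t) (w t)"
abbreviation "oo t \<equiv> trans A (w t) (cst (cf t) (w t)) (xi t)"
abbreviation "out t \<equiv> fst (snd (oo t))"
abbreviation "qo t \<equiv> snd (snd (oo t))"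
abbreviation "pnd t p \<equiv> rc (cf t) p < qc (cf t) p"

lemma step_out_eq: "step_out A rn t = Some (oo t)"
  by (simp add: step_out_def mkrun_def)
lemma sent_eq: "sent A rn t = out t"
  by (simp add: sent_def step_out_eq)
lemma queried_eq: "queried A rn t = qo t"
  by (simp add: queried_def step_out_eq)
lemma steps_of_eq: "steps_of rn p t \<longleftrightarrow> w t = p"
  by (auto simp: steps_of_def mkrun_def)
lemma is_recv_eq: "is_recv rn t \<longleftrightarrow> \<not> pnd t (w t) \<and> box (cf t) (w t) \<noteq> []"
  by (auto simp: is_recv_def mkrun_def inp_of_def split: list.splits)
lemma is_resp_eq: "is_resp_of rn p t \<longleftrightarrow> w t = p \<and> pnd t p"
  by (auto simp: is_resp_of_def mkrun_def inp_of_def split: list.splits)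
lemma is_query_eq: "is_query_of A rn p t \<longleftrightarrow> w t = p \<and> qo t \<noteq> None"
  by (auto simp: is_query_of_def steps_of_eq queried_eq)

lemma cst_Suc: "cst (cf (Suc t)) = (cst (cf t))(w t := fst (oo t))"
  by (simp add: cfgs.simps stepc_def Let_def)
lemma qc_Suc: "qc (cf (Suc t)) p = (if w t = p \<and> qo t \<noteq> None then Suc (qc (cf t) p) else qc (cf t) p)"
  by (simp add: cfgs.simps stepc_def Let_def)
lemma rc_Suc: "rc (cf (Suc t)) p = (if w t = p \<and> pnd t p then Suc (rc (cf t) p) else rc (cf t) p)"
  by (simp add: cfgs.simps stepc_def Let_def)
lemma box_Suc: "box (cf (Suc t)) q = (if q = w t \<and> \<not> pnd t q \<and> box (cf t) q \<noteq> [] then tl (box (cf t) q) else box (cf t) q)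
   @ newmsgs (w t) t (out t) q"
  by (auto simp: cfgs.simps stepc_def Let_def)
lemma lq_Suc: "lq (cf (Suc t)) p = (if w t = p \<and> qo t \<noteq> None then the (qo t) else lq (cf t) p)"
  by (auto simp: cfgs.simps stepc_def Let_def split: option.splits)
lemma rtab_Suc: "rtab (cf (Suc t)) = (if pnd t (w t) then (rtab (cf t))(rc (cf t) (w t) := Some (ans (cf t) (w t))) else rtab (cf t))"
  by (simp add: cfgs.simps stepc_def Let_def)

lemma qcount_eq: "qcount A rn t p = qc (cf t) p"
  by (induction t) (auto simp: qcount_def card_Suc_split is_query_eq qc_Suc)
lemma rcount_eq: "rcount rn t p = rc (cf t) p"
  by (induction t) (auto simp: rcount_def card_Suc_split is_resp_eq rc_Suc)
lemma pending_eq: "pending A rn t p \<longleftrightarrow> pnd t p"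
  by (simp add: pending_def qcount_eq rcount_eq)


lemma inv_cnt: "rc (cf t) p \<le> qc (cf t) p \<and> qc (cf t) p \<le> Suc (rc (cf t) p)"
  by (induction t) (auto simp: qc_Suc rc_Suc)

lemma cnt_after_query: "w t = p \<Longrightarrow> qo t \<noteq> None \<Longrightarrow> rc (cf (Suc t)) p = qc (cf t) p \<and> qc (cf (Suc t)) p = Suc (qc (cf t) p)"
  using inv_cnt[of t p] by (auto simp: qc_Suc rc_Suc)

lemma inv_lq: "pnd t p \<Longrightarrow> \<exists>s<t. w s = p \<and> qo s = Some (lq (cf t) p) \<and> qc (cf s) p = rc (cf t) p"
proof (induction t)
  case 0
  then show ?case by simp
next
  case (Suc t)
  show ?case
  proof (cases "w t = p \<and> qo t \<noteq> None")
    case True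
    then obtain v where v: "qo t = Some v" by auto
    have "qc (cf t) p = rc (cf (Suc t)) p" using cnt_after_query[of t p] True by auto
    then show ?thesis using True v by (intro exI[of _ t]) (auto simp: lq_Suc)
  next
    case False
    then have e: "qc (cf (Suc t)) p = qc (cf t) p" "lq (cf (Suc t)) p = lq (cf t) p" by (auto simp: qc_Suc lq_Suc)
    have "pnd t p \<and> rc (cf (Suc t)) p = rc (cf t) p"
      using Suc.prems inv_cnt[of t p] e by (auto simp: rc_Suc split: if_splits)
    then show ?thesis using Suc.IH e by (metis less_Suc_eq)
  qed
qed

lemma rtab_stable: "rtab (cf t) j = Some d \<Longrightarrow> rtab (cf (Suc t)) j = Some d"
  by (auto simp: rtab_Suc ans_def)

lemma rtab_stable': "t \<le> t' \<Longrightarrow> rtab (cf t) j = Some d \<Longrightarrow> rtab (cf t') j = Some d"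
  by (induction t' rule: dec_induct) (auto intro: rtab_stable)

lemma rresp_eq: assumes h: "rtab (cf t) j = Some d" shows "rresp A V w j = d"
proof -
  let ?t0 = "LEAST t. rtab (cf t) j \<noteq> None"
  have ex: "\<exists>t. rtab (cf t) j \<noteq> None" using h by auto
  have "rtab (cf ?t0) j \<noteq> None" by (rule LeastI_ex[OF ex])
  then obtain d0 where d0: "rtab (cf ?t0) j = Some d0" by auto
  have "rtab (cf (max t ?t0)) j = Some d" "rtab (cf (max t ?t0)) j = Some d0"
    using rtab_stable'[OF _ h, of "max t ?t0"] rtab_stable'[OF _ d0, of "max t ?t0"] by auto
  then have "d = d0" by simp
  then show ?thesis using ex d0 by (simp add: rresp_def)
qed

lemma inv_rtab: "rtab (cf t) j = Some d \<Longrightarrow> \<exists>s. qo s = Some d \<and> qc (cf s) (w s) = j"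
proof (induction t arbitrary: d)
  case 0
  then show ?case by simp
next
  case (Suc t)
  show ?case
  proof (cases "pnd t (w t) \<and> j = rc (cf t) (w t)")
    case True
    then have d: "d = ans (cf t) (w t)" using Suc.prems by (simp add: rtab_Suc)
    show ?thesis
    proof (cases "rtab (cf t) j")
      case None
      then have "d = lq (cf t) (w t)" using d True by (simp add: ans_def)
      then show ?thesis using inv_lq[of t "w t"] True by metis
    next
      case (Some d')
      then have "d = d'" using d True by (simp add: ans_def)
      then show ?thesis using Suc.IH Some by auto
    qed
  next
    case False
    then have "rtab (cf t) j = Some d" using Suc.prems by (auto simp: rtab_Suc split: if_splits)
    then show ?thesis using Suc.IH by auto
  qed
qed

lemma inv_box: "(q, m, s, i) \<in> set (box (cf t) p) \<Longrightarrow> s < t \<and> w s = q \<and> i < length (out s) \<and> out s ! i = (p, m)"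
proof (induction t arbitrary: q m s i)
  case 0
  then show ?case by simp
next
  case (Suc t)
  show ?case
  proof (cases "(q, m, s, i) \<in> set (newmsgs (w t) t (out t) p)")
    case True
    then show ?thesis by (auto simp: newmsgs_def intro: prod_eqI)
  next
    case False
    then have "(q, m, s, i) \<in> set (box (cf t) p)" using Suc.prems
      by (auto simp: box_Suc split: if_splits dest: list.set_sel(2))
    then show ?thesis using Suc.IH by fastforce
  qed
qed

lemma box_sid_lt: "e \<in> set (box (cf t) p) \<Longrightarrow> fst (snd (snd e)) < t"
  using inv_box[of "fst e" "fst (snd e)" "fst (snd (snd e))" "snd (snd (snd e))" t p] by auto

lemma src_recv: assumes "is_recv rn t" shows "box (cf t) (w t) \<noteq> [] \<and> src rn t = snd (snd (hd (box (cf t) (w t))))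
   \<and> hd (box (cf t) (w t)) \<in> set (box (cf t) (w t))"
proof -
  have "box (cf t) (w t) \<noteq> []" using assms is_recv_eq by auto
  then show ?thesis by (simp add: mkrun_def)
qed

lemma src_lt: "is_recv rn t \<Longrightarrow> fst (src rn t) < t"
  using src_recv[of t] box_sid_lt by metis

lemma distinct_new: "distinct (map (\<lambda>e. snd (snd e)) (newmsgs p t ms q))"
  by (simp add: newmsgs_def distinct_map inj_on_def)

lemma new_sid: "e \<in> set (newmsgs p t ms q) \<Longrightarrow> fst (snd (snd e)) = t"
  by (auto simp: newmsgs_def)

lemma inv_dist: "distinct (map (\<lambda>e. snd (snd e)) (box (cf t) p)) \<and>
   (\<forall>t1<t. w t1 = p \<and> is_recv rn t1 \<longrightarrow> src rn t1 \<notin> (\<lambda>e. snd (snd e)) ` set (box (cf t) p))"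
proof (induction t)
  case 0
  then show ?case by simp
next
  case (Suc t)
  let ?sid = "\<lambda>e. snd (snd e)"
  let ?b = "box (cf t) p"
  let ?N = "newmsgs (w t) t (out t) p"
  have disj: "?sid ` set ?b \<inter> ?sid ` set ?N = {}"
    using box_sid_lt[of _ t p] new_sid by fastforce
  show ?case
  proof (cases "p = w t \<and> \<not> pnd t p \<and> ?b \<noteq> []")
    case True
    then have "p = w t" "\<not> pnd t p" "?b \<noteq> []" by auto
    then have bS: "box (cf (Suc t)) p = tl ?b @ ?N" by (simp add: box_Suc)
    have d1: "distinct (map ?sid (tl ?b))" using Suc.IH by (simp add: map_tl distinct_tl)
    have sub: "set (tl ?b) \<subseteq> set ?b" using True by (cases ?b) auto
    have dj: "?sid ` set (tl ?b) \<inter> ?sid ` set ?N = {}" using disj sub by blast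
    have D: "distinct (map ?sid (box (cf (Suc t)) p))"
      unfolding bS map_append distinct_append set_map using d1 distinct_new dj by blast
    have hd_notin: "?sid (hd ?b) \<notin> ?sid ` set (tl ?b)"
      using Suc.IH True by (cases ?b) auto
    have "src rn t1 \<notin> ?sid ` set (box (cf (Suc t)) p)" if t1: "t1 < Suc t" "w t1 = p" "is_recv rn t1" for t1
    proof (cases "t1 = t")
      case True
      then have "src rn t1 = ?sid (hd ?b)" using t1 src_recv by auto
      moreover have "?sid (hd ?b) \<notin> ?sid ` set ?N"
      proof -
        have lt: "fst (?sid (hd ?b)) < t" using box_sid_lt[of "hd ?b" t p] \<open>?b \<noteq> []\<close> by auto
        then show ?thesis using new_sid by force
      qed
      ultimately show ?thesis using hd_notin unfolding bS by auto
    next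
      case False
      then have "t1 < t" using t1 by auto
      then have "src rn t1 \<notin> ?sid ` set ?b" using Suc.IH t1 by auto
      moreover have "src rn t1 \<notin> ?sid ` set ?N" using src_lt[OF t1(3)] new_sid \<open>t1 < t\<close> by fastforce
      ultimately show ?thesis using sub unfolding bS by auto
    qed
    then show ?thesis using D by auto
  next
    case False
    then have bS: "box (cf (Suc t)) p = ?b @ ?N" by (auto simp: box_Suc)
    have D: "distinct (map ?sid (box (cf (Suc t)) p))"
      unfolding bS map_append distinct_append set_map using Suc.IH distinct_new disj by blast
    have "src rn t1 \<notin> ?sid ` set (box (cf (Suc t)) p)" if t1: "t1 < Suc t" "w t1 = p" "is_recv rn t1" for t1
    proof (cases "t1 = t")
      case True
      then show ?thesis using False t1 by (auto simp: is_recv_eq)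
    next
      case False
      then have "t1 < t" using t1 by auto
      then have "src rn t1 \<notin> ?sid ` set ?b" using Suc.IH t1 by auto
      moreover have "src rn t1 \<notin> ?sid ` set ?N" using src_lt[OF t1(3)] new_sid \<open>t1 < t\<close> by fastforce
      ultimately show ?thesis unfolding bS by auto
    qed
    then show ?thesis using D by auto
  qed
qed


lemma frozen: "a \<le> b \<Longrightarrow> (\<forall>t'. a \<le> t' \<and> t' < b \<longrightarrow> w t' \<noteq> p) \<Longrightarrow>
   qc (cf b) p = qc (cf a) p \<and> rc (cf b) p = rc (cf a) p"
  by (induction b rule: dec_induct) (auto simp: qc_Suc rc_Suc)

lemma grow: "a \<le> b \<Longrightarrow> (\<forall>t'. a \<le> t' \<and> t' < b \<longrightarrow> w t' = p \<longrightarrow> pnd t' p) \<Longrightarrow>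
   \<exists>ys. box (cf b) p = box (cf a) p @ ys"
proof (induction b rule: dec_induct)
  case base
  then show ?case by simp
next
  case (step b)
  then obtain ys where ys: "box (cf b) p = box (cf a) p @ ys" by auto
  have "box (cf (Suc b)) p = box (cf b) p @ newmsgs (w b) b (out b) p"
    using step.prems step.hyps by (auto simp: box_Suc)
  then show ?case using ys by auto
qed

lemma next_turn: assumes "\<forall>t. \<exists>t'\<ge>t. w t' = p"
  shows "\<exists>t1\<ge>t. w t1 = p \<and> (\<forall>t'. t \<le> t' \<and> t' < t1 \<longrightarrow> w t' \<noteq> p)"
proof -
  let ?P = "\<lambda>t1. t1 \<ge> t \<and> w t1 = p"
  have ex: "\<exists>t1. ?P t1" using assms by auto
  have "?P (LEAST t1. ?P t1)" by (rule LeastI_ex[OF ex])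
  moreover have "\<forall>t'. t \<le> t' \<and> t' < (LEAST t1. ?P t1) \<longrightarrow> w t' \<noteq> p"
    using not_less_Least by blast
  ultimately show ?thesis by blast
qed

lemma liveness: assumes inf: "\<forall>t. \<exists>t'\<ge>t. w t' = p" and ws: "w s = p" and q: "qo s \<noteq> None"
  shows "\<exists>t. is_resp_of rn p t \<and> rcount rn t p = qc (cf s) p"
proof -
  have c: "rc (cf (Suc s)) p = qc (cf s) p" "qc (cf (Suc s)) p = Suc (qc (cf s) p)"
    using cnt_after_query[OF ws q] by auto
  obtain t1 where t1: "t1 \<ge> Suc s" "w t1 = p" "\<forall>t'. Suc s \<le> t' \<and> t' < t1 \<longrightarrow> w t' \<noteq> p"
    using next_turn[OF inf, of "Suc s"] by auto
  have "qc (cf t1) p = qc (cf (Suc s)) p \<and> rc (cf t1) p = rc (cf (Suc s)) p"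
    using frozen[OF t1(1) t1(3)] .
  then show ?thesis using c t1 by (intro exI[of _ t1]) (auto simp: is_resp_eq rcount_eq)
qed

lemma reliab: assumes inf: "\<forall>t. \<exists>t'\<ge>t. w t' = p"
  shows "idx < length (box (cf t) p) \<Longrightarrow> box (cf t) p ! idx = e \<Longrightarrow>
    (\<exists>t'. is_recv rn t' \<and> src rn t' = snd (snd e)) \<or> (\<exists>t0. \<forall>t'\<ge>t0. pnd t' p)"
proof (induction idx arbitrary: t)
  case (0 t)
  show ?case
  proof (cases "\<exists>t1\<ge>t. w t1 = p \<and> \<not> pnd t1 p")
    case True
    let ?P = "\<lambda>t1. t1\<ge>t \<and> w t1 = p \<and> \<not> pnd t1 p"
    have t1: "?P (LEAST t1. ?P t1)" by (rule LeastI_ex[OF True])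
    define t1 where "t1 = (LEAST t1. ?P t1)"
    have before: "\<forall>t'. t \<le> t' \<and> t' < t1 \<longrightarrow> w t' = p \<longrightarrow> pnd t' p"
      using not_less_Least unfolding t1_def by blast
    obtain ys where ys: "box (cf t1) p = box (cf t) p @ ys" using grow[OF _ before] t1 unfolding t1_def by auto
    have ne: "box (cf t1) p \<noteq> []" using ys 0 by auto
    have "hd (box (cf t1) p) = e" using ys 0 by (cases "box (cf t) p") auto
    moreover have "is_recv rn t1" using ne t1 unfolding t1_def by (auto simp: is_recv_eq)
    moreover have "src rn t1 = snd (snd (hd (box (cf t1) p)))" using t1 unfolding t1_def by (auto simp: mkrun_def)
    ultimately show ?thesis by auto
  next
    case False
    have "\<forall>t'\<ge>t. pnd t' p"
    proof (intro allI impI)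
      fix t' assume "t' \<ge> t"
      obtain t2 where t2: "t2 \<ge> t'" "w t2 = p" "\<forall>t''. t' \<le> t'' \<and> t'' < t2 \<longrightarrow> w t'' \<noteq> p"
        using next_turn[OF inf, of t'] by auto
      have "pnd t2 p" using False t2 \<open>t' \<ge> t\<close> by auto
      then show "pnd t' p" using frozen[OF t2(1) t2(3)] by auto
    qed
    then show ?thesis by auto
  qed
next
  case (Suc i t)
  show ?case
  proof (cases "\<exists>t1\<ge>t. w t1 = p \<and> \<not> pnd t1 p")
    case True
    let ?P = "\<lambda>t1. t1\<ge>t \<and> w t1 = p \<and> \<not> pnd t1 p"
    have t1: "?P (LEAST t1. ?P t1)" by (rule LeastI_ex[OF True])
    define t1 where "t1 = (LEAST t1. ?P t1)"
    have before: "\<forall>t'. t \<le> t' \<and> t' < t1 \<longrightarrow> w t' = p \<longrightarrow> pnd t' p"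
      using not_less_Least unfolding t1_def by blast
    obtain ys where ys: "box (cf t1) p = box (cf t) p @ ys" using grow[OF _ before] t1 unfolding t1_def by auto
    have ne: "box (cf t1) p \<noteq> []" using ys Suc.prems by auto
    have bS: "box (cf (Suc t1)) p = tl (box (cf t1) p) @ newmsgs (w t1) t1 (out t1) p"
      using t1 ne unfolding t1_def by (auto simp: box_Suc)
    have "i < length (box (cf (Suc t1)) p)" using bS ys Suc.prems by auto
    moreover have "box (cf (Suc t1)) p ! i = e"
    proof -
      have "box (cf t1) p ! Suc i = e" using ys Suc.prems by (simp add: nth_append)
      then have "tl (box (cf t1) p) ! i = e" using ne by (cases "box (cf t1) p") auto
      moreover have "i < length (tl (box (cf t1) p))" using ys Suc.prems by auto
      ultimately show ?thesis using bS by (simp add: nth_append)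
    qed
    ultimately show ?thesis using Suc.IH by blast
  next
    case False
    have "\<forall>t'\<ge>t. pnd t' p"
    proof (intro allI impI)
      fix t' assume "t' \<ge> t"
      obtain t2 where t2: "t2 \<ge> t'" "w t2 = p" "\<forall>t''. t' \<le> t'' \<and> t'' < t2 \<longrightarrow> w t'' \<noteq> p"
        using next_turn[OF inf, of t'] by auto
      have "pnd t2 p" using False t2 \<open>t' \<ge> t\<close> by auto
      then show "pnd t' p" using frozen[OF t2(1) t2(3)] by auto
    qed
    then show ?thesis by auto
  qed
qed


lemma recv_src_ne: assumes r1: "is_recv rn t1" and r2: "is_recv rn t2" and lt: "t1 < t2"
  shows "src rn t1 \<noteq> src rn t2"
proof
  assume eq: "src rn t1 = src rn t2"
  obtain q1 m1 s1 i1 where h1: "hd (box (cf t1) (w t1)) = (q1, m1, s1, i1)" by (cases "hd (box (cf t1) (w t1))") auto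
  obtain q2 m2 s2 i2 where h2: "hd (box (cf t2) (w t2)) = (q2, m2, s2, i2)" by (cases "hd (box (cf t2) (w t2))") auto
  have i1: "out s1 ! i1 = (w t1, m1)" "src rn t1 = (s1, i1)"
    using src_recv[OF r1] inv_box[of q1 m1 s1 i1 t1 "w t1"] h1 by auto
  have i2: "out s2 ! i2 = (w t2, m2)" "src rn t2 = (s2, i2)"
    using src_recv[OF r2] inv_box[of q2 m2 s2 i2 t2 "w t2"] h2 by auto
  have "w t1 = w t2" using i1 i2 eq by auto
  then have "src rn t1 \<notin> (\<lambda>e. snd (snd e)) ` set (box (cf t2) (w t2))"
    using inv_dist[of t2 "w t2"] lt r1 by auto
  moreover have "src rn t2 \<in> (\<lambda>e. snd (snd e)) ` set (box (cf t2) (w t2))"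
    using src_recv[OF r2] by auto
  ultimately show False using eq by simp
qed

lemma admissible_mkrun:
  assumes H1: "\<forall>t. w t \<in> Proc n \<and> w t \<notin> F t"
    and H2: "\<forall>p \<in> Proc n - Faulty F. \<forall>t. \<exists>t'\<ge>t. w t' = p"
  shows "admissible A n (kTAg_prob n (Proc n)) fo F V rn"
  unfolding admissible_def
proof (intro conjI)
  show "\<forall>p. st rn 0 p = init A p (V p)" by (simp add: mkrun_def)
  show "\<forall>t. sched rn t = None \<longrightarrow> st rn (Suc t) = st rn t" by (simp add: mkrun_def)
  show "\<forall>t p x. sched rn t = Some (p, x) \<longrightarrow> p \<in> Proc n \<and> p \<notin> F t \<and>
        st rn (Suc t) = (st rn t)(p := fst (trans A p (st rn t p) x))"
    using H1 by (auto simp: mkrun_def cst_Suc)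
  show "\<forall>t p q m. sched rn t = Some (p, IMsg q m) \<longrightarrow>
        fst (src rn t) < t \<and> steps_of rn q (fst (src rn t)) \<and>
        snd (src rn t) < length (sent A rn (fst (src rn t))) \<and>
        sent A rn (fst (src rn t)) ! snd (src rn t) = (p, m)"
  proof (intro allI impI)
    fix t p q m assume a: "sched rn t = Some (p, IMsg q m)"
    then have p: "p = w t" and x: "xi t = IMsg q m" by (auto simp: mkrun_def)
    then have "\<not> pnd t p" by (auto simp: inp_of_def)
    then obtain s i rest where b: "box (cf t) p = (q, m, s, i) # rest" using x p
      by (auto simp: inp_of_def split: list.splits)
    have "src rn t = (s, i)" using b p by (simp add: mkrun_def)
    then show "fst (src rn t) < t \<and> steps_of rn q (fst (src rn t)) \<and>
        snd (src rn t) < length (sent A rn (fst (src rn t))) \<and>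
        sent A rn (fst (src rn t)) ! snd (src rn t) = (p, m)"
    proof -
      have h: "s < t" "w s = q" "i < length (out s)" "out s ! i = (p, m)" using inv_box[of q m s i t p] b by auto
      show ?thesis unfolding \<open>src rn t = (s, i)\<close> fst_conv snd_conv sent_eq steps_of_eq using h by blast
    qed
  qed
  show "inj_on (src rn) {t. is_recv rn t}"
  proof (rule inj_onI)
    fix t1 t2 assume "t1 \<in> {t. is_recv rn t}" "t2 \<in> {t. is_recv rn t}" "src rn t1 = src rn t2"
    then show "t1 = t2" using recv_src_ne by (metis linorder_neqE_nat mem_Collect_eq)
  qed
  show "\<forall>t p d. sched rn t = Some (p, IResp d) \<longrightarrow> pending A rn t p \<and> d = resp rn (rcount rn t p)"
  proof (intro allI impI)
    fix t p d assume "sched rn t = Some (p, IResp d)"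
    then have p: "p = w t" and x: "xi t = IResp d" by (auto simp: mkrun_def)
    then have pn: "pnd t p" and d: "d = ans (cf t) p" by (auto simp: inp_of_def split: if_splits list.splits)
    have "rtab (cf (Suc t)) (rc (cf t) p) = Some d" using pn d p by (simp add: rtab_Suc)
    then have "rresp A V w (rc (cf t) p) = d" by (rule rresp_eq)
    then show "pending A rn t p \<and> d = resp rn (rcount rn t p)"
    proof -
      have "resp rn = rresp A V w" by (simp add: mkrun_def)
      then show ?thesis using pn \<open>rresp A V w (rc (cf t) p) = d\<close> by (simp add: pending_eq rcount_eq)
    qed
  qed
  show "\<forall>t p x. sched rn t = Some (p, x) \<and> pending A rn t p \<longrightarrow> (\<exists>d. x = IResp d)"
  proof (intro allI impI)
    fix t p x assume a: "sched rn t = Some (p, x) \<and> pending A rn t p"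
    then have "pnd t p" by (simp add: pending_eq)
    moreover have "p = w t" "x = xi t" using a by (auto simp: mkrun_def)
    ultimately show "\<exists>d. x = IResp d" by (simp add: inp_of_def)
  qed
  show "\<forall>j. (\<exists>t p. is_resp_of rn p t \<and> rcount rn t p = j) \<longrightarrow>
        (\<forall>W. binvec (Proc n) W \<and> (\<forall>p v. p \<in> Proc n \<and> query_val A rn j p v \<longrightarrow> W p = v)
             \<longrightarrow> resp rn j \<in> kTAg_prob n (Proc n) F W)"
  proof (intro allI impI)
    fix j W
    assume "\<exists>t p. is_resp_of rn p t \<and> rcount rn t p = j"
    then obtain t p where tp: "w t = p" "pnd t p" "rc (cf t) p = j" by (auto simp: is_resp_eq rcount_eq)
    have "rtab (cf (Suc t)) j = Some (ans (cf t) p)" using tp by (auto simp: rtab_Suc)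
    moreover obtain s where s: "qo s = Some (ans (cf t) p)" "qc (cf s) (w s) = j"
      using inv_rtab[OF calculation] by auto
    ultimately have r: "resp rn j = ans (cf t) p" using rresp_eq by (simp add: mkrun_def)
    have qv: "query_val A rn j (w s) (ans (cf t) p)"
      unfolding query_val_def using s by (auto simp: is_query_eq qcount_eq queried_eq)
    assume W: "binvec (Proc n) W \<and> (\<forall>p v. p \<in> Proc n \<and> query_val A rn j p v \<longrightarrow> W p = v)"
    have ws: "w s \<in> Proc n" using H1 by auto
    then have "W (w s) = ans (cf t) p" using W qv by auto
    then show "resp rn j \<in> kTAg_prob n (Proc n) F W" using kTAg_safe[OF ws] W r by auto
  qed
  show "\<forall>j. n - fo \<le> card {p \<in> Proc n. queries_in A rn j p} \<longrightarrow>
        (\<forall>p \<in> Proc n - Faulty F. queries_in A rn j p \<longrightarrow>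
            (\<exists>t. is_resp_of rn p t \<and> rcount rn t p = j))"
  proof (intro allI impI ballI)
    fix j p assume p: "p \<in> Proc n - Faulty F" and q: "queries_in A rn j p"
    then obtain s v where s: "w s = p" "qo s = Some v" "qc (cf s) p = j"
      by (auto simp: queries_in_def query_val_def is_query_eq qcount_eq queried_eq)
    show "\<exists>t. is_resp_of rn p t \<and> rcount rn t p = j"
      using liveness[of p s] H2 p s by auto
  qed
  show "\<forall>p \<in> Proc n - Faulty F. \<forall>t. \<exists>t' \<ge> t. steps_of rn p t' \<or> (\<forall>t'' \<ge> t'. pending A rn t'' p)"
    using H2 by (auto simp: steps_of_eq)
  show "\<forall>s i p. i < length (sent A rn s) \<and> fst (sent A rn s ! i) = p \<and> p \<in> Proc n - Faulty F
        \<longrightarrow> (\<exists>t. is_recv rn t \<and> src rn t = (s, i)) \<or> (\<exists>t. \<forall>t' \<ge> t. pending A rn t' p)"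
  proof (intro allI impI)
    fix s i p assume a: "i < length (sent A rn s) \<and> fst (sent A rn s ! i) = p \<and> p \<in> Proc n - Faulty F"
    let ?e = "(w s, snd (out s ! i), (s, i))"
    have "?e \<in> set (newmsgs (w s) s (out s) p)" using a by (auto simp: newmsgs_def sent_eq)
    then have "?e \<in> set (box (cf (Suc s)) p)" by (simp add: box_Suc)
    then obtain idx where "idx < length (box (cf (Suc s)) p)" "box (cf (Suc s)) p ! idx = ?e"
      by (auto simp: in_set_conv_nth)
    then have "(\<exists>t'. is_recv rn t' \<and> src rn t' = (s, i)) \<or> (\<exists>t0. \<forall>t'\<ge>t0. pnd t' p)"
      using reliab[of p idx "Suc s" ?e] H2 a by auto
    then show "(\<exists>t. is_recv rn t \<and> src rn t = (s, i)) \<or> (\<exists>t. \<forall>t' \<ge> t. pending A rn t' p)"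
      by (simp add: pending_eq)
  qed
qed

end


lemma prefix_eq:
  assumes W: "\<forall>t<T. w1 t = w3 t \<and> w1 t \<notin> K" and V: "\<forall>p. p \<notin> K \<longrightarrow> V1 p = V3 p"
  shows "t \<le> T \<Longrightarrow> box (cfgs A V1 w1 t) = box (cfgs A V3 w3 t) \<and> qc (cfgs A V1 w1 t) = qc (cfgs A V3 w3 t)
     \<and> rc (cfgs A V1 w1 t) = rc (cfgs A V3 w3 t) \<and> lq (cfgs A V1 w1 t) = lq (cfgs A V3 w3 t)
     \<and> rtab (cfgs A V1 w1 t) = rtab (cfgs A V3 w3 t)
     \<and> (\<forall>p. p \<notin> K \<longrightarrow> cst (cfgs A V1 w1 t) p = cst (cfgs A V3 w3 t) p)"
proof (induction t)
  case 0
  show ?case using V by simp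
next
  case (Suc t)
  let ?c1 = "cfgs A V1 w1 t" and ?c3 = "cfgs A V3 w3 t"
  have IH: "box ?c1 = box ?c3" "qc ?c1 = qc ?c3" "rc ?c1 = rc ?c3" "lq ?c1 = lq ?c3" "rtab ?c1 = rtab ?c3"
    "\<forall>p. p \<notin> K \<longrightarrow> cst ?c1 p = cst ?c3 p" using Suc by auto
  have tT: "t < T" using Suc.prems by simp
  have "w1 t = w3 t \<and> w1 t \<notin> K" using W tT by blast
  then have wp: "w3 t = w1 t" "w1 t \<notin> K" by auto
  have cp: "cst ?c1 (w1 t) = cst ?c3 (w1 t)" using IH wp by auto
  have an: "ans ?c1 (w1 t) = ans ?c3 (w1 t)" using IH by (simp add: ans_def split: option.splits)
  have ip: "inp_of ?c1 (w1 t) = inp_of ?c3 (w1 t)" using IH an by (simp add: inp_of_def)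
  show ?case using IH cp ip an wp by (auto simp add: cfgs.simps(2) stepc_def Let_def)
qed

lemma mod_hit: "x < (m::nat) \<Longrightarrow> (t * m + x) mod m = x"
  by (metis mod_less mod_mult_self3)

lemma le_mul_pos: "0 < (m::nat) \<Longrightarrow> t \<le> t * m"
  by simp

lemma no_solve:
  fixes A :: "('s, 'm) algorithm"
  assumes k1: "1 \<le> k" and kf: "k \<le> f" and fn: "f \<le> n - 1"
  shows "\<not> solves_with n A (kTAg k n f) (Cons n fo)"
proof
  assume S: "solves_with n A (kTAg k n f) (Cons n fo)"
  have kn: "k < n" using k1 kf fn by auto
  define V1 where "V1 = (\<lambda>p::nat. if p \<le> k then 0 else (1::nat))"
  define F1 where "F1 = (\<lambda>t::nat. {1..k})"
  define w1 where "w1 = (\<lambda>t. Suc k + t mod (n - k))"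
  have cons: "fst (Cons n fo) = kTAg_prob n (Proc n)" "snd (Cons n fo) = fo" by (simp_all add: Cons_def kTAg_def)
  have kt: "fst (kTAg k n f) = kTAg_prob k (Proc n)" "snd (kTAg k n f) = f" by (simp_all add: kTAg_def)
  have FF1: "Faulty F1 = {1..k}" by (simp add: Faulty_def F1_def)
  have H1: "\<forall>t. w1 t \<in> Proc n \<and> w1 t \<notin> F1 t"
  proof
    fix t
    have "t mod (n - k) < n - k" using kn by simp
    then show "w1 t \<in> Proc n \<and> w1 t \<notin> F1 t" by (auto simp: w1_def F1_def Proc_def)
  qed
  have H2: "\<forall>p \<in> Proc n - Faulty F1. \<forall>t. \<exists>t'\<ge>t. w1 t' = p"
  proof (intro ballI allI)
    fix p t assume p: "p \<in> Proc n - Faulty F1"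
    then have pk: "k < p" "p \<le> n" by (auto simp: FF1 Proc_def)
    let ?t' = "t * (n - k) + (p - Suc k)"
    have "?t' mod (n - k) = p - Suc k" using mod_hit[of "p - Suc k" "n - k" t] pk by simp
    then have "w1 ?t' = p" using pk by (simp add: w1_def)
    moreover have "?t' \<ge> t" using le_mul_pos[of "n - k" t] kn by linarith
    ultimately show "\<exists>t'\<ge>t. w1 t' = p" by blast
  qed
  let ?r1 = "mkrun A V1 w1"
  have adm1: "admissible A n (fst (Cons n fo)) (snd (Cons n fo)) F1 V1 ?r1"
    using admissible_mkrun[OF H1 H2] cons by simp
  have fp1: "failure_pattern (Proc n) F1" using kn by (auto simp: failure_pattern_def F1_def mono_def Proc_def)
  have cf1: "card (Faulty F1) \<le> snd (kTAg k n f)" using kf by (simp add: FF1 kt)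
  have bv1: "binvec (Proc n) V1" by (simp add: binvec_def V1_def)
  have nc: "n \<in> Proc n - Faulty F1" using kn by (auto simp: FF1 Proc_def)
  have sol: "\<And>F V (r :: ('s, 'm) run). failure_pattern (Proc n) F \<Longrightarrow> card (Faulty F) \<le> snd (kTAg k n f)
     \<Longrightarrow> binvec (Proc n) V \<Longrightarrow> admissible A n (fst (Cons n fo)) (snd (Cons n fo)) F V r \<Longrightarrow>
     (\<forall>p t d. p \<in> Proc n \<and> decision A (st r t p) = Some d \<longrightarrow> d \<in> fst (kTAg k n f) F V)
     \<and> (\<forall>p \<in> Proc n - Faulty F. \<exists>t d. decision A (st r t p) = Some d)"
    using S unfolding solves_with_def by blast
  note s1 = sol[OF fp1 cf1 bv1 adm1]
  obtain T d where Td: "decision A (st ?r1 T n) = Some d"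
    using s1 nc by blast
  have nP: "n \<in> Proc n" using nc by blast
  have "d \<in> kTAg_prob k (Proc n) F1 V1"
    using s1 nP Td kt by auto
  moreover have "{p \<in> Proc n. V1 p = 0} = {1..k}" using kn by (auto simp: Proc_def V1_def)
  ultimately have d0: "d = 0" by (simp add: kTAg_prob_def)
  define V3 where "V3 = (\<lambda>p::nat. (1::nat))"
  define F3 where "F3 = (\<lambda>t::nat. {1..k - 1})"
  define w3 where "w3 = (\<lambda>t. if t < T then w1 t else k + (t - T) mod (n - k + 1))"
  have FF3: "Faulty F3 = {1..k - 1}" by (simp add: Faulty_def F3_def)
  have H1': "\<forall>t. w3 t \<in> Proc n \<and> w3 t \<notin> F3 t"
  proof
    fix t
    show "w3 t \<in> Proc n \<and> w3 t \<notin> F3 t"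
    proof (cases "t < T")
      case True
      then have "w3 t = w1 t" by (simp add: w3_def)
      moreover have "w1 t \<in> Proc n \<and> w1 t \<notin> F1 t" using H1 by blast
      ultimately show ?thesis by (auto simp: F3_def F1_def)
    next
      case False
      then have e: "w3 t = k + (t - T) mod (n - k + 1)" by (simp add: w3_def)
      have "(t - T) mod (n - k + 1) < n - k + 1" by simp
      then have "k + (t - T) mod (n - k + 1) \<le> n" using kn by linarith
      then show ?thesis using e k1 by (auto simp: F3_def Proc_def)
    qed
  qed
  have H2': "\<forall>p \<in> Proc n - Faulty F3. \<forall>t. \<exists>t'\<ge>t. w3 t' = p"
  proof (intro ballI allI)
    fix p t assume p: "p \<in> Proc n - Faulty F3"
    then have pk: "k \<le> p" "p \<le> n" using k1 by (auto simp: FF3 Proc_def)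
    let ?t' = "T + t * (n - k + 1) + (p - k)"
    have "(?t' - T) mod (n - k + 1) = p - k"
    proof -
      have e: "?t' - T = t * (n - k + 1) + (p - k)" by simp
      have lt: "p - k < n - k + 1" using pk by linarith
      show ?thesis by (simp only: e mod_hit[OF lt])
    qed
    moreover have nlt: "\<not> ?t' < T" by simp
    moreover have "w3 ?t' = k + (?t' - T) mod (n - k + 1)" by (simp only: w3_def nlt if_False)
    ultimately have "w3 ?t' = p" using pk by simp
    moreover have "?t' \<ge> t" by simp
    ultimately show "\<exists>t'\<ge>t. w3 t' = p" by blast
  qed
  let ?r3 = "mkrun A V3 w3"
  have adm3: "admissible A n (fst (Cons n fo)) (snd (Cons n fo)) F3 V3 ?r3"
    using admissible_mkrun[OF H1' H2'] cons by simp
  have fp3: "failure_pattern (Proc n) F3" using kn by (auto simp: failure_pattern_def F3_def mono_def Proc_def)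
  have cf3: "card (Faulty F3) \<le> snd (kTAg k n f)" using kf by (simp add: FF3 kt)
  have bv3: "binvec (Proc n) V3" by (simp add: binvec_def V3_def)
  have pre: "\<forall>t<T. w1 t = w3 t \<and> w1 t \<notin> {..k}" by (auto simp: w3_def w1_def)
  have preV: "\<forall>p. p \<notin> {..k} \<longrightarrow> V1 p = V3 p" by (auto simp: V1_def V3_def)
  have "cst (cfgs A V1 w1 T) n = cst (cfgs A V3 w3 T) n"
    using prefix_eq[OF pre preV, of T A] kn by auto
  then have "decision A (st ?r3 T n) = Some 0" using Td d0 by (simp add: mkrun_def)
  then have "0 \<in> kTAg_prob k (Proc n) F3 V3"
    using sol[OF fp3 cf3 bv3 adm3] nP kt by auto
  moreover have "{p \<in> Proc n. V3 p = 0} = {}" by (simp add: V3_def)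
  ultimately show False using k1 by (simp add: kTAg_prob_def V3_def FF3)
qed

theorem mainTheorem9:
  fixes n f k :: nat
  assumes "1 \<le> k" and "k \<le> f" and "f \<le> n - 1"
  shows "(\<forall>A :: ('s, 'm) algorithm. \<not> solves_with n A (kTAg k n f) (Cons n (n - 1)))
       \<and> (\<forall>A :: ('s, 'm) algorithm. \<not> solves_with n A (kTAg k n f) (Cons n f))"
  using no_solve[OF assms] by blast

end
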